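(* For any $p\in(0,1)$, under the Alternating Path Randomized Design with parameter $p$, the Horvitz–Thompson estimator $\hat\tau_{\mathrm{AP}}$ is unbiased for the average treatment effect: $\mathbb{E}[\hat\tau_{\mathrm{AP}}]=\tau$.
   Context: Setting: $2N$ agents; $\mathbb{M}^t,\mathbb{M}^c$ are one-to-one matchings (sets of unordered pairs of distinct agents, each agent in at most one pair). Each pair $(a,b)$ has a fixed real potential outcome $Y_{a,b}$ (non-random; randomness comes only from the design). Estimand: $\tau=\frac1N\big(\sum_{(a,b)\in\mathbb{M}^t}Y_{a,b}-\sum_{(a,b)\in\mathbb{M}^c}Y_{a,b}\big)$. The disagreement set $\triangle\mathbb{M}^{(t,c)}=(\mathbb{M}^t\cup\mathbb{M}^c)\setminus(\mathbb{M}^t\cap\mathbb{M}^c)$, viewed as a graph, has connected components $\mathcal{P}_1,\dots,\mathcal{P}_m$, each an alternating path or cycle: a sequence $(v_{i,1},\dots,v_{i,k(i)+1})$ whose consecutive pairs $e_{i,j}=(v_{i,j},v_{i,j+1})$, $j=1,\dots,k(i)$, are the component's edges, alternating between $\triangle\mathbb{M}^{(t,c)}_t=\triangle\mathbb{M}^{(t,c)}\cap\mathbb{M}^t$ and $\triangle\mathbb{M}^{(t,c)}_c=\triangle\mathbb{M}^{(t,c)}\cap\mathbb{M}^c$; it is a cycle if $v_{i,1}=v_{i,k(i)+1}$, a path otherwise. Alternating Path Randomized Design with parameter $p$: indicators $W_{i,j}\in\{0,1\}$, independent across components; within $\mathcal{P}_i$, $\mathbb{P}(W_{i,1}=1)=p/(1+p)$;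 for $2\le j\le k(i)$ (path) or $2\le j\le k(i)-1$ (cycle), conditionally on $W_{i,1},\dots,W_{i,j-1}$, $W_{i,j}=1$ with probability $p$ if $W_{i,j-1}=0$ and $W_{i,j}=0$ if $W_{i,j-1}=1$; for a cycle, $W_{i,k(i)}=1$ iff $W_{i,1}=W_{i,k(i)-1}=0$. Horvitz–Thompson estimator: \[\hat\tau_{\mathrm{AP}}=\frac1N\sum_{i=1}^m\Big(\sum_{j:\,e_{i,j}\in\triangle\mathbb{M}^{(t,c)}_t}\frac{W_{i,j}Y_{e_{i,j}}}{\mathbb{P}(W_{i,j}=1)}-\sum_{j:\,e_{i,j}\in\triangle\mathbb{M}^{(t,c)}_c}\frac{W_{i,j}Y_{e_{i,j}}}{\mathbb{P}(W_{i,j}=1)}\Big).\] *)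

theory Defs
  imports "HOL-Probability.Probability"
begin

text \<open>An unordered pair of distinct agents is represented as a two-element set.\<close>

definition is_matching :: "'a set \<Rightarrow> 'a set set \<Rightarrow> bool" where
  "is_matching A M \<longleftrightarrow>
     (\<forall>e\<in>M. card e = 2 \<and> e \<subseteq> A) \<and>
     (\<forall>e\<in>M. \<forall>e'\<in>M. e \<noteq> e' \<longrightarrow> e \<inter> e' = {})"

definition disagree :: "'a set set \<Rightarrow> 'a set set \<Rightarrow> 'a set set" where
  "disagree Mt Mc = (Mt \<union> Mc) - (Mt \<inter> Mc)"

definition disagree_t :: "'a set set \<Rightarrow> 'a set set \<Rightarrow> 'a set set" where
  "disagree_t Mt Mc = disagree Mt Mc \<inter> Mt"

definition disagree_c :: "'a set set \<Rightarrow> 'a set set \<Rightarrow> 'a set set" where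
  "disagree_c Mt Mc = disagree Mt Mc \<inter> Mc"

definition ate :: "nat \<Rightarrow> 'a set set \<Rightarrow> 'a set set \<Rightarrow> ('a set \<Rightarrow> real) \<Rightarrow> real" where
  "ate N Mt Mc Y = (1 / real N) * ((\<Sum>e\<in>Mt. Y e) - (\<Sum>e\<in>Mc. Y e))"

text \<open>A component is given by its vertex sequence (v_1,...,v_{k+1}); its edges are
  e_j = {v_j, v_{j+1}} (here 0-indexed: j < k). It is a cycle iff v_1 = v_{k+1}.\<close>

definition comp_len :: "'a list \<Rightarrow> nat" where
  "comp_len vs = length vs - 1"

definition comp_edge :: "'a list \<Rightarrow> nat \<Rightarrow> 'a set" where
  "comp_edge vs j = {vs ! j, vs ! Suc j}"

definition comp_edges :: "'a list \<Rightarrow> 'a set set" where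
  "comp_edges vs = comp_edge vs ` {..<comp_len vs}"

definition is_cycle :: "'a list \<Rightarrow> bool" where
  "is_cycle vs \<longleftrightarrow> hd vs = last vs"

definition alt_decomposition ::
  "'a set set \<Rightarrow> 'a set set \<Rightarrow> 'a list list \<Rightarrow> bool" where
  "alt_decomposition Mt Mc comps \<longleftrightarrow>
     (\<forall>vs\<in>set comps.
        length vs \<ge> 2 \<and>
        (if is_cycle vs then distinct (butlast vs) else distinct vs) \<and>
        comp_edges vs \<subseteq> disagree Mt Mc \<and>
        (\<forall>j. Suc j < comp_len vs \<longrightarrow>
              (comp_edge vs j \<in> Mt \<longleftrightarrow> comp_edge vs (Suc j) \<in> Mc))) \<and>
     (\<Union>vs\<in>set comps. comp_edges vs) = disagree Mt Mc \<and>
     (\<forall>i<length comps. \<forall>i'<length comps. i \<noteq> i' \<longrightarrow>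
        set (comps ! i) \<inter> set (comps ! i') = {})"

fun ap_chain :: "real \<Rightarrow> nat \<Rightarrow> bool \<Rightarrow> bool list pmf" where
  "ap_chain p 0 prev = return_pmf []"
| "ap_chain p (Suc n) prev =
     do { w \<leftarrow> (if prev then return_pmf False else bernoulli_pmf p);
          ws \<leftarrow> ap_chain p n w;
          return_pmf (w # ws) }"

definition ap_path_design :: "real \<Rightarrow> nat \<Rightarrow> bool list pmf" where
  "ap_path_design p k =
     do { w1 \<leftarrow> bernoulli_pmf (p / (1 + p));
          ws \<leftarrow> ap_chain p (k - 1) w1;
          return_pmf (w1 # ws) }"

definition ap_cycle_design :: "real \<Rightarrow> nat \<Rightarrow> bool list pmf" where
  "ap_cycle_design p k =
     do { w1 \<leftarrow> bernoulli_pmf (p / (1 + p));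
          ws \<leftarrow> ap_chain p (k - 2) w1;
          return_pmf (w1 # ws @ [\<not> w1 \<and> \<not> last (w1 # ws)]) }"

definition ap_comp_design :: "real \<Rightarrow> 'a list \<Rightarrow> bool list pmf" where
  "ap_comp_design p vs =
     (if is_cycle vs then ap_cycle_design p (comp_len vs) else ap_path_design p (comp_len vs))"

fun ap_design :: "real \<Rightarrow> 'a list list \<Rightarrow> bool list list pmf" where
  "ap_design p [] = return_pmf []"
| "ap_design p (vs # vss) =
     do { w \<leftarrow> ap_comp_design p vs;
          ws \<leftarrow> ap_design p vss;
          return_pmf (w # ws) }"

definition ap_prob :: "real \<Rightarrow> 'a list \<Rightarrow> nat \<Rightarrow> real" where
  "ap_prob p vs j = measure_pmf.prob (ap_comp_design p vs) {w. w ! j}"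

definition ht_estimator ::
  "real \<Rightarrow> nat \<Rightarrow> 'a set set \<Rightarrow> 'a set set \<Rightarrow> ('a set \<Rightarrow> real) \<Rightarrow> 'a list list
     \<Rightarrow> bool list list \<Rightarrow> real" where
  "ht_estimator p N Mt Mc Y comps W =
     (1 / real N) *
     (\<Sum>i<length comps.
        (\<Sum>j\<in>{j. j < comp_len (comps ! i) \<and> comp_edge (comps ! i) j \<in> disagree_t Mt Mc}.
            (if W ! i ! j then 1 else 0) * Y (comp_edge (comps ! i) j) / ap_prob p (comps ! i) j)
        - (\<Sum>j\<in>{j. j < comp_len (comps ! i) \<and> comp_edge (comps ! i) j \<in> disagree_c Mt Mc}.
            (if W ! i ! j then 1 else 0) * Y (comp_edge (comps ! i) j) / ap_prob p (comps ! i) j))"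

end

theory Submission
  imports Defs
begin

lemma chain_fin: "finite (set_pmf (ap_chain p n b))"
  by (induction n arbitrary: b) (auto simp: set_bind_pmf)

lemma comp_fin: "finite (set_pmf (ap_comp_design p vs))"
  unfolding ap_comp_design_def ap_path_design_def ap_cycle_design_def
  by (auto simp: set_bind_pmf chain_fin)

lemma design_fin: "finite (set_pmf (ap_design p comps))"
  by (induction comps) (auto simp: set_bind_pmf comp_fin)

lemma design_nth: "i < length comps \<Longrightarrow>
   map_pmf (\<lambda>W. W ! i) (ap_design p comps) = ap_comp_design p (comps ! i)"
proof (induction comps arbitrary: i)
  case Nil then show ?case by simp
next
  case (Cons vs vss)
  show ?case
  proof (cases i)
    case 0 then show ?thesis
      by (simp add: map_bind_pmf map_pmf_def[symmetric] map_pmf_comp map_pmf_const bind_return_pmf')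
  next
    case (Suc i') 
    have "map_pmf (\<lambda>W. W ! i) (ap_design p (vs # vss))
      = bind_pmf (ap_comp_design p vs) (\<lambda>w. map_pmf (\<lambda>W. W ! i') (ap_design p vss))"
      using Suc by (simp add: map_bind_pmf map_pmf_comp map_pmf_def[symmetric])
    also have "\<dots> = ap_comp_design p (vss ! i')" using Cons Suc by simp
    finally show ?thesis using Suc by simp
  qed
qed

fun valid :: "bool \<Rightarrow> bool list \<Rightarrow> bool" where
  "valid b [] = True"
| "valid b (w # ws) = (\<not> (b \<and> w) \<and> valid w ws)"

lemma valid_repl: "valid b (replicate c False)"
  by (induction c arbitrary: b) auto

lemma valid_single: "(b \<longrightarrow> a > 0) \<Longrightarrow> valid b (replicate a False @ True # replicate c False)"
  by (induction a arbitrary: b) (auto simp: valid_repl)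

lemma chain_support:
  assumes "0 < p" "p < 1"
  shows "length ws = n \<Longrightarrow> valid b ws \<Longrightarrow> ws \<in> set_pmf (ap_chain p n b)"
proof (induction n arbitrary: b ws)
  case 0 then show ?case by simp
next
  case (Suc n)
  then obtain w ws' where ws: "ws = w # ws'" by (cases ws) auto
  show ?case using Suc ws assms by (auto simp: set_bind_pmf)
qed

lemma pos_from_witness: "w \<in> set_pmf M \<Longrightarrow> w ! j \<Longrightarrow> measure_pmf.prob M {w. w ! j} > 0"
  by (rule measure_pmf_posI) auto

lemma ap_prob_pos:
  assumes p: "0 < p" "p < 1" and j: "j < comp_len vs"
  shows "ap_prob p vs j > 0"
proof -
  define k where "k = comp_len vs"
  have q: "0 < p / (1 + p)" "p / (1 + p) < 1" using p by auto
  have B: "set_pmf (bernoulli_pmf (p / (1 + p))) = UNIV" using q by simp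
  have CS: "\<And>ws n b. length ws = n \<Longrightarrow> valid b ws \<Longrightarrow> ws \<in> set_pmf (ap_chain p n b)"
    using chain_support[OF p] by blast
  have jk: "j < k" using j k_def by simp
  show ?thesis
  proof (cases "is_cycle vs")
    case False
    have D: "ap_comp_design p vs = ap_path_design p k" using False by (simp add: ap_comp_design_def k_def)
    have mem: "w1 # ws \<in> set_pmf (ap_path_design p k)" if "length ws = k - 1" "valid w1 ws" for w1 ws
      using that CS B unfolding ap_path_design_def by (auto simp: set_bind_pmf)
    show ?thesis unfolding ap_prob_def D
    proof (cases j)
      case 0
      show "measure_pmf.prob (ap_path_design p k) {w. w ! j} > 0"
        by (rule pos_from_witness[OF mem[of "replicate (k - 1) False" True]]) (auto simp: valid_repl 0)
    next
      case (Suc j')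
      show "measure_pmf.prob (ap_path_design p k) {w. w ! j} > 0"
        by (rule pos_from_witness[OF mem[of "replicate j' False @ True # replicate (k - 1 - j) False" False]])
           (use jk Suc in \<open>auto simp: valid_single nth_append\<close>)
    qed
  next
    case True
    have D: "ap_comp_design p vs = ap_cycle_design p k" using True by (simp add: ap_comp_design_def k_def)
    have mem: "w1 # ws @ [\<not> w1 \<and> \<not> last (w1 # ws)] \<in> set_pmf (ap_cycle_design p k)"
      if "length ws = k - 2" "valid w1 ws" for w1 ws
      using that CS B unfolding ap_cycle_design_def by (auto simp: set_bind_pmf)
    show ?thesis unfolding ap_prob_def D
    proof (cases "j < k - 1")
      case lt: True
      show "measure_pmf.prob (ap_cycle_design p k) {w. w ! j} > 0"
      proof (cases j)
        case 0
        show ?thesis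
          by (rule pos_from_witness[OF mem[of "replicate (k - 2) False" True]]) (auto simp: valid_repl 0)
      next
        case (Suc j')
        show ?thesis
          by (rule pos_from_witness[OF mem[of "replicate j' False @ True # replicate (k - 2 - j) False" False]])
             (use lt Suc in \<open>auto simp: valid_single nth_append\<close>)
      qed
    next
      case ge: False
      show "measure_pmf.prob (ap_cycle_design p k) {w. w ! j} > 0"
      proof (cases "k = 1")
        case True
        show ?thesis
          by (rule pos_from_witness[OF mem[of "[]" True]]) (use True jk in auto)
      next
        case False
        have jj: "j = k - 1" "k \<ge> 2" using ge jk False by auto
        have l: "last (False # replicate (k - 2) False) = False"
          by (cases "k - 2") auto
        show ?thesis
          by (rule pos_from_witness[OF mem[of "replicate (k - 2) False" False]])
             (use jj l in \<open>auto simp: valid_repl nth_append\<close>)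
      qed
    qed
  qed
qed

lemma edge_inj:
  assumes len: "length vs \<ge> 2"
    and dist: "if is_cycle vs then distinct (butlast vs) else distinct vs"
    and sub: "comp_edges vs \<subseteq> disagree Mt Mc"
    and alt: "\<forall>j. Suc j < comp_len vs \<longrightarrow>
              (comp_edge vs j \<in> Mt \<longleftrightarrow> comp_edge vs (Suc j) \<in> Mc)"
  shows "inj_on (comp_edge vs) {..<comp_len vs}"
proof -
  define k where "k = comp_len vs"
  have lk: "length vs = Suc k" using len by (simp add: k_def comp_len_def)
  have ne: "comp_edge vs j \<noteq> comp_edge vs j'" if jj: "j < j'" "j' < k" for j j'
  proof
    assume eq: "comp_edge vs j = comp_edge vs j'"
    hence E: "(vs ! j = vs ! j' \<and> vs ! Suc j = vs ! Suc j') \<or> (vs ! j = vs ! Suc j' \<and> vs ! Suc j = vs ! j')"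
      by (simp add: comp_edge_def doubleton_eq_iff)
    show False
    proof (cases "is_cycle vs")
      case False
      hence d: "distinct vs" using dist by simp
      show False using E d jj lk by (auto simp: nth_eq_iff_index_eq)
    next
      case True
      hence d: "distinct (butlast vs)" using dist by simp
      have hl: "vs ! k = vs ! 0" using True lk
        by (metis is_cycle_def diff_Suc_1 hd_conv_nth last_conv_nth list.size(3) nat.distinct(1))
      have bi: "\<And>i. i < k \<Longrightarrow> butlast vs ! i = vs ! i" using lk by (simp add: nth_butlast)
      have lb: "length (butlast vs) = k" using lk by simp
      have inj: "\<And>a b. a < k \<Longrightarrow> b < k \<Longrightarrow> vs ! a = vs ! b \<Longrightarrow> a = b"
        using d bi lb by (metis nth_eq_iff_index_eq)
      have "j = 0 \<and> j' = 1 \<and> k = 2"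
      proof -
        have c1: "\<not> (vs ! j = vs ! j')" using inj[of j j'] jj by (metis less_trans less_irrefl)
        hence c2: "vs ! j = vs ! Suc j'" "vs ! Suc j = vs ! j'" using E by auto
        have "Suc j' = k"
        proof (rule ccontr)
          assume "Suc j' \<noteq> k" hence "Suc j' < k" using jj by simp
          thus False using inj[of j "Suc j'"] c2 jj by simp
        qed
        hence j0: "j = 0" using inj[of j 0] c2 hl jj by simp
        hence "j' = 1" using inj[of 1 j'] c2 jj by simp
        thus ?thesis using j0 \<open>Suc j' = k\<close> by simp
      qed
      hence "comp_edge vs 0 \<in> Mt \<longleftrightarrow> comp_edge vs 1 \<in> Mc" using alt by (simp add: k_def)
      moreover have "comp_edge vs 0 \<in> disagree Mt Mc" using sub \<open>j = 0 \<and> j' = 1 \<and> k = 2\<close>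
        by (auto simp: comp_edges_def k_def)
      moreover have "comp_edge vs 0 = comp_edge vs 1" using eq \<open>j = 0 \<and> j' = 1 \<and> k = 2\<close> by simp
      ultimately show False by (auto simp: disagree_def)
    qed
  qed
  show ?thesis unfolding inj_on_def k_def[symmetric]
    by (metis lessThan_iff linorder_neqE_nat ne)
qed

lemma expect_term:
  assumes "i < length comps" "j < comp_len (comps ! i)" "0 < p" "p < 1"
  shows "measure_pmf.expectation (ap_design p comps)
     (\<lambda>W. (if W ! i ! j then 1 else 0) * y / ap_prob p (comps ! i) j) = y"
proof -
  let ?q = "ap_prob p (comps ! i) j"
  have q: "?q > 0" using ap_prob_pos assms by blast
  have f: "(\<lambda>W. (if W ! i ! j then 1 else 0) * y / ?q) = (\<lambda>W. indicator {W. W ! i ! j} W * (y / ?q))"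
    by (auto simp: indicator_def)
  have "measure_pmf.prob (ap_design p comps) {W. W ! i ! j} = ?q"
    unfolding ap_prob_def design_nth[OF assms(1), symmetric] by (simp add: vimage_def)
  thus ?thesis unfolding f using q by simp
qed

theorem proposition4:
  fixes A :: "'a set" and N :: nat and Mt Mc :: "'a set set"
    and Y :: "'a set \<Rightarrow> real" and comps :: "'a list list" and p :: real
  assumes "finite A" and "card A = 2 * N"
    and "is_matching A Mt" and "is_matching A Mc"
    and "alt_decomposition Mt Mc comps"
    and "0 < p" and "p < 1"
  shows "measure_pmf.expectation (ap_design p comps) (ht_estimator p N Mt Mc Y comps)
           = ate N Mt Mc Y"
proof -
  note ad = assms(5)[unfolded alt_decomposition_def]
  define L where "L = length comps"
  define ce where "ce i j = comp_edge (comps ! i) j" for i j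
  define kk where "kk i = comp_len (comps ! i)" for i
  define ff where "ff x = ce (fst x) (snd x)" for x
  define S where "S = Sigma {..<L} (\<lambda>i. {..<kk i})"
  have esub: "ce i j \<subseteq> set (comps ! i)" if "i < L" "j < kk i" for i j
  proof -
    have "Suc j < length (comps ! i)" using that by (simp add: kk_def comp_len_def)
    thus ?thesis by (auto simp: ce_def comp_edge_def)
  qed
  have inj: "inj_on ff S"
  proof (rule inj_onI, clarsimp simp: S_def ff_def)
    fix i j i' j'
    assume a: "i < L" "j < kk i" "i' < L" "j' < kk i'" "ce i j = ce i' j'"
    show "i = i' \<and> j = j'"
    proof (cases "i = i'")
      case True
      have "comps ! i \<in> set comps" using a L_def by simp
      hence "inj_on (comp_edge (comps ! i)) {..<comp_len (comps ! i)}"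
        using ad by (intro edge_inj[of _ Mt Mc]) auto
      thus ?thesis using a True by (auto simp: inj_on_def ce_def kk_def)
    next
      case False
      have "set (comps ! i) \<inter> set (comps ! i') = {}" using ad a False L_def by blast
      moreover have "ce i j \<noteq> {}" by (simp add: ce_def comp_edge_def)
      ultimately show ?thesis using esub[OF a(1,2)] esub[OF a(3,4)] a(5) by blast
    qed
  qed
  have img: "ff ` S = disagree Mt Mc"
  proof -
    have "ff ` S = (\<Union>i<L. comp_edges (comps ! i))"
      unfolding S_def comp_edges_def ce_def kk_def ff_def by (auto simp: image_iff; blast)
    also have "\<dots> = (\<Union>vs\<in>set comps. comp_edges vs)"
    proof -
      have "set comps = (\<lambda>i. comps ! i) ` {..<L}" by (auto simp: L_def in_set_conv_nth)
      thus ?thesis by simp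
    qed
    finally show ?thesis using ad by simp
  qed
  have sumD: "(\<Sum>i<L. \<Sum>j\<in>{j. j < kk i \<and> ce i j \<in> D}. Y (ce i j)) = sum Y D"
    if D: "D \<subseteq> disagree Mt Mc" for D
  proof -
    define B where "B = {x \<in> S. ff x \<in> D}"
    have "(\<Sum>i<L. \<Sum>j\<in>{j. j < kk i \<and> ce i j \<in> D}. Y (ce i j))
       = (\<Sum>(i, j)\<in>Sigma {..<L} (\<lambda>i. {j. j < kk i \<and> ce i j \<in> D}). Y (ce i j))"
      by (rule sum.Sigma) auto
    also have "Sigma {..<L} (\<lambda>i. {j. j < kk i \<and> ce i j \<in> D}) = B"
      by (auto simp: S_def B_def ff_def)
    also have "(\<Sum>(i, j)\<in>B. Y (ce i j)) = (\<Sum>x\<in>B. Y (ff x))"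
      by (rule sum.cong) (auto simp: ff_def)
    also have "\<dots> = sum Y (ff ` B)"
    proof -
      have "B \<subseteq> S" by (simp add: B_def)
      hence "inj_on ff B" using inj_on_subset[OF inj] by blast
      thus ?thesis by (simp add: sum.reindex)
    qed
    also have "ff ` B = D"
    proof
      show "ff ` B \<subseteq> D" by (auto simp: B_def)
      show "D \<subseteq> ff ` B"
      proof
        fix d assume "d \<in> D"
        then obtain x where "x \<in> S" "d = ff x" using img D by blast
        thus "d \<in> ff ` B" using \<open>d \<in> D\<close> by (auto simp: B_def)
      qed
    qed
    finally show ?thesis .
  qed
  have finM: "finite Mt" "finite Mc"
  proof -
    have "Mt \<subseteq> Pow A" "Mc \<subseteq> Pow A" using assms(3,4) by (auto simp: is_matching_def)
    thus "finite Mt" "finite Mc" using assms(1) by (auto intro: finite_subset)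
  qed
  have MtMc: "sum Y (disagree_t Mt Mc) - sum Y (disagree_c Mt Mc) = sum Y Mt - sum Y Mc"
  proof -
    have "Mt = disagree_t Mt Mc \<union> (Mt \<inter> Mc)" "Mc = disagree_c Mt Mc \<union> (Mt \<inter> Mc)"
      by (auto simp: disagree_t_def disagree_c_def disagree_def)
    moreover have "disagree_t Mt Mc \<inter> (Mt \<inter> Mc) = {}" "disagree_c Mt Mc \<inter> (Mt \<inter> Mc) = {}"
      by (auto simp: disagree_t_def disagree_c_def disagree_def)
    moreover have "finite (disagree_t Mt Mc)" "finite (disagree_c Mt Mc)" "finite (Mt \<inter> Mc)"
      using finM by (auto simp: disagree_t_def disagree_c_def)
    ultimately have "sum Y Mt = sum Y (disagree_t Mt Mc) + sum Y (Mt \<inter> Mc)"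
        "sum Y Mc = sum Y (disagree_c Mt Mc) + sum Y (Mt \<inter> Mc)"
      by (metis sum.union_disjoint)+
    thus ?thesis by simp
  qed
  have intg: "\<And>f. integrable (measure_pmf (ap_design p comps)) (f :: _ \<Rightarrow> real)"
    by (rule integrable_measure_pmf_finite[OF design_fin])
  have "measure_pmf.expectation (ap_design p comps) (ht_estimator p N Mt Mc Y comps)
     = (1 / real N) * (\<Sum>i<L. (\<Sum>j\<in>{j. j < kk i \<and> ce i j \<in> disagree_t Mt Mc}. Y (ce i j))
                              - (\<Sum>j\<in>{j. j < kk i \<and> ce i j \<in> disagree_c Mt Mc}. Y (ce i j)))"
    unfolding ht_estimator_def
    apply (simp only: integral_mult_right_zero Bochner_Integration.integral_sum[OF intg] Bochner_Integration.integral_diff[OF intg intg])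
    apply (simp only: L_def[symmetric] kk_def[symmetric] ce_def[symmetric])
    apply (intro arg_cong[where f = "\<lambda>x. 1 / real N * x"] sum.cong refl arg_cong2[where f = "(-)"])
     apply (unfold ce_def, rule expect_term; use assms(6,7) in \<open>simp add: L_def kk_def\<close>)
    apply (unfold ce_def, rule expect_term; use assms(6,7) in \<open>simp add: L_def kk_def\<close>)
    done
  also have "\<dots> = (1 / real N) * (sum Y (disagree_t Mt Mc) - sum Y (disagree_c Mt Mc))"
  proof -
    have "disagree_t Mt Mc \<subseteq> disagree Mt Mc" "disagree_c Mt Mc \<subseteq> disagree Mt Mc"
      by (auto simp: disagree_t_def disagree_c_def)
    thus ?thesis by (simp only: sum_subtractf sumD)
  qed
  finally show ?thesis using MtMc by (simp add: ate_def)
qed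

end
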